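(* Consider a prepare-and-measure QKD protocol in which Alice prepares states $\{\rho_i^\mu\}\subset\mathcal{S}(A'')$ with probabilities $p(i,\mu)$, recording $(i,\mu)$ in a classical register $A$, and a virtual protocol identical to it except that the prepared states are $\{\xi_i^\mu\}\subset\mathcal{S}(A')$. Suppose there exists a quantum channel $\Psi$ from $A'$ to $A''$ (a source map) with $\rho_i^\mu=\Psi[\xi_i^\mu]$ for all $i,\mu$. Then $\varepsilon_{\mathrm{sec}}$-secrecy of the virtual protocol implies $\varepsilon_{\mathrm{sec}}$-secrecy of the real protocol.
   Context: $\mathcal{S}(H)$ denotes the density operators on $H$. A prepare-and-measure protocol with per-round prepared state $\rho^{\mathrm{prep}}_{AX}=\sum_{i,\mu}p(i,\mu)|i,\mu\rangle\langle i,\mu|_A\otimes\rho_i^\mu$ (Alice keeps $A$, sends $X$) and protocol map $\mathcal{E}^{(l)}$, ideal map $\mathcal{E}^{(l),\mathrm{ideal}}$ acting on $A^nB^n$ (the same maps for the real and virtual protocols), is $\varepsilon_{\mathrm{sec}}$-secret if $\tfrac12\|((\mathcal{E}^{(l)}-\mathcal{E}^{(l),\mathrm{ideal}})\otimes\mathrm{id}_{E^n})[(\mathrm{id}_{A^n}\otimes\Phi)(\rho^{\mathrm{prep}\,\otimes n}_{AX})]\|_1\leq\varepsilon_{\mathrm{sec}}$ for all channels $\Phi$ from $X^n$ to $B^nE^n$; $X=A''$ for the real and $X=A'$ for the virtual protocol. The ideal map replaces the key on acceptance by a uniformly random key of the same length independent of other outputs. *)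

theory Defs
  imports "Jordan_Normal_Form.Matrix"
begin

text \<open>Tensor products use the Kronecker
  convention: the index of A \<otimes> B is iA * dim B + iB (first factor most significant).\<close>

definition mtrace :: "complex mat \<Rightarrow> complex" where
  "mtrace M = (\<Sum>i<dim_row M. M $$ (i, i))"

definition dagger :: "complex mat \<Rightarrow> complex mat" where
  "dagger M = mat (dim_col M) (dim_row M) (\<lambda>(i, j). cnj (M $$ (j, i)))"

definition psd :: "complex mat \<Rightarrow> bool" where
  "psd M \<longleftrightarrow> dim_row M = dim_col M \<and>
     (\<forall>v \<in> carrier_vec (dim_row M).
        let z = (\<Sum>i<dim_row M. cnj (v $ i) * (M *\<^sub>v v) $ i) in Im z = 0 \<and> 0 \<le> Re z)"

definition density :: "nat \<Rightarrow> complex mat \<Rightarrow> bool" where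
  "density d \<rho> \<longleftrightarrow> \<rho> \<in> carrier_mat d d \<and> psd \<rho> \<and> mtrace \<rho> = 1"

definition psd_sqrt :: "complex mat \<Rightarrow> complex mat" where
  "psd_sqrt A = (THE S. S \<in> carrier_mat (dim_row A) (dim_row A) \<and> psd S \<and> S * S = A)"

definition trace_norm :: "complex mat \<Rightarrow> real" where
  "trace_norm M = Re (mtrace (psd_sqrt (dagger M * M)))"

definition kron :: "complex mat \<Rightarrow> complex mat \<Rightarrow> complex mat" where
  "kron A B = mat (dim_row A * dim_row B) (dim_col A * dim_col B)
     (\<lambda>(i, j). A $$ (i div dim_row B, j div dim_col B) * B $$ (i mod dim_row B, j mod dim_col B))"

fun kron_pow :: "nat \<Rightarrow> complex mat \<Rightarrow> complex mat" where
  "kron_pow 0 M = 1\<^sub>m 1"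
| "kron_pow (Suc n) M = kron M (kron_pow n M)"

text \<open>(id_k \<otimes> \<Phi>)(M) for M on C^k \<otimes> C^d1 and \<Phi> mapping d1\<times>d1 to d2\<times>d2 matrices
  (applied blockwise; this is id \<otimes> \<Phi> for linear \<Phi>).\<close>
definition id_tensor :: "nat \<Rightarrow> nat \<Rightarrow> nat \<Rightarrow> (complex mat \<Rightarrow> complex mat) \<Rightarrow> complex mat \<Rightarrow> complex mat" where
  "id_tensor k d1 d2 \<Phi> M = mat (k * d2) (k * d2)
     (\<lambda>(r, c). \<Phi> (mat d1 d1 (\<lambda>(x, y). M $$ ((r div d2) * d1 + x, (c div d2) * d1 + y)))
                 $$ (r mod d2, c mod d2))"

text \<open>(\<E> \<otimes> id_m)(M) for M on C^d1 \<otimes> C^m and \<E> mapping d1\<times>d1 to d2\<times>d2 matrices.\<close>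
definition tensor_id :: "nat \<Rightarrow> nat \<Rightarrow> nat \<Rightarrow> (complex mat \<Rightarrow> complex mat) \<Rightarrow> complex mat \<Rightarrow> complex mat" where
  "tensor_id d1 d2 m \<E> M = mat (d2 * m) (d2 * m)
     (\<lambda>(r, c). \<E> (mat d1 d1 (\<lambda>(x, y). M $$ (x * m + r mod m, y * m + c mod m)))
                 $$ (r div m, c div m))"

definition channel :: "nat \<Rightarrow> nat \<Rightarrow> (complex mat \<Rightarrow> complex mat) \<Rightarrow> bool" where
  "channel d1 d2 \<Phi> \<longleftrightarrow>
     (\<forall>M \<in> carrier_mat d1 d1. \<Phi> M \<in> carrier_mat d2 d2) \<and>
     (\<forall>M \<in> carrier_mat d1 d1. \<forall>N \<in> carrier_mat d1 d1. \<Phi> (M + N) = \<Phi> M + \<Phi> N) \<and>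
     (\<forall>M \<in> carrier_mat d1 d1. \<forall>a::complex. \<Phi> (a \<cdot>\<^sub>m M) = a \<cdot>\<^sub>m \<Phi> M) \<and>
     (\<forall>k. \<forall>M \<in> carrier_mat (k * d1) (k * d1). psd M \<longrightarrow> psd (id_tensor k d1 d2 \<Phi> M)) \<and>
     (\<forall>M \<in> carrier_mat d1 d1. mtrace (\<Phi> M) = mtrace M)"

definition ketbra :: "nat \<Rightarrow> nat \<Rightarrow> complex mat" where
  "ketbra K k = mat K K (\<lambda>(i, j). if i = k \<and> j = k then 1 else 0)"

text \<open>Per-round prepared state \<rho>^prep_{AX} = \<Sum>_k p(k) |k\<rangle>\<langle>k|_A \<otimes> \<rho>_k, where the
  labels (i,\<mu>) are enumerated as k < K.\<close>
definition prep_state :: "nat \<Rightarrow> (nat \<Rightarrow> real) \<Rightarrow> (nat \<Rightarrow> complex mat) \<Rightarrow> nat \<Rightarrow> complex mat" where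
  "prep_state K p \<rho> dX = mat (K * dX) (K * dX)
     (\<lambda>(r, c). \<Sum>k<K. complex_of_real (p k) * kron (ketbra K k) (\<rho> k) $$ (r, c))"

text \<open>digit t (most significant first) of an n-digit base-b number m.\<close>
definition digit :: "nat \<Rightarrow> nat \<Rightarrow> nat \<Rightarrow> nat \<Rightarrow> nat" where
  "digit n b m t = (m div b ^ (n - 1 - t)) mod b"

text \<open>Canonical reordering (A X)^{\<otimes> n} \<cong> A^n X^n: entry (r,c) of the result (A^n X^n order)
  is entry (\<pi> r, \<pi> c) of the input ((A X)^n order).\<close>
definition reorder_idx :: "nat \<Rightarrow> nat \<Rightarrow> nat \<Rightarrow> nat \<Rightarrow> nat" where
  "reorder_idx n dA dX r = (\<Sum>t<n. (digit n dA (r div dX ^ n) t * dX + digit n dX (r mod dX ^ n) t)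
                                      * (dA * dX) ^ (n - 1 - t))"

definition reorder :: "nat \<Rightarrow> nat \<Rightarrow> nat \<Rightarrow> complex mat \<Rightarrow> complex mat" where
  "reorder n dA dX M = mat ((dA * dX) ^ n) ((dA * dX) ^ n)
     (\<lambda>(r, c). M $$ (reorder_idx n dA dX r, reorder_idx n dA dX c))"

text \<open>\<epsilon>-secrecy of an n-round protocol with labels k < K, probabilities p, prepared states
  \<rho>_k on C^dX, Bob's system B^n of dimension dB, protocol map \<E> and ideal map \<E>_ideal
  acting on A^n B^n with output dimension dOut.\<close>
definition secret ::
  "nat \<Rightarrow> nat \<Rightarrow> (nat \<Rightarrow> real) \<Rightarrow> (nat \<Rightarrow> complex mat) \<Rightarrow> nat \<Rightarrow> nat \<Rightarrow> nat
   \<Rightarrow> (complex mat \<Rightarrow> complex mat) \<Rightarrow> (complex mat \<Rightarrow> complex mat) \<Rightarrow> real \<Rightarrow> bool" where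
  "secret n K p \<rho> dX dB dOut \<E> \<E>ideal \<epsilon> \<longleftrightarrow>
     (\<forall>dE > 0. \<forall>\<Phi>. channel (dX ^ n) (dB * dE) \<Phi> \<longrightarrow>
        (let \<sigma> = id_tensor (K ^ n) (dX ^ n) (dB * dE) \<Phi>
                    (reorder n K dX (kron_pow n (prep_state K p \<rho> dX)))
         in (1/2) * trace_norm (tensor_id (K ^ n * dB) dOut dE \<E> \<sigma>
                                 - tensor_id (K ^ n * dB) dOut dE \<E>ideal \<sigma>) \<le> \<epsilon>))"

end

theory Submission
  imports Defs
begin


definition blk :: "nat \<Rightarrow> complex mat \<Rightarrow> nat \<Rightarrow> nat \<Rightarrow> complex mat" where
  "blk d M a b = mat d d (\<lambda>(x, y). M $$ (a * d + x, b * d + y))"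

lemma blk_carrier[simp]: "blk d M a b \<in> carrier_mat d d"
  by (simp add: blk_def)

lemma blk_dim[simp]: "dim_row (blk d M a b) = d" "dim_col (blk d M a b) = d"
  by (simp_all add: blk_def)

lemma blk_index[simp]: "x < d \<Longrightarrow> y < d \<Longrightarrow> blk d M a b $$ (x, y) = M $$ (a * d + x, b * d + y)"
  by (simp add: blk_def)

lemma idx_bound: "(a::nat) < k \<Longrightarrow> i < d \<Longrightarrow> a * d + i < k * d"
proof -
  assume "a < k" "i < d"
  then have "a * d + i < Suc a * d" by simp
  also have "\<dots> \<le> k * d" using \<open>a < k\<close> by (intro mult_le_mono1) simp
  finally show ?thesis .
qed

lemma id_tensor_blk: "id_tensor k d1 d2 \<Phi> M = mat (k * d2) (k * d2)
     (\<lambda>(r, c). \<Phi> (blk d1 M (r div d2) (c div d2)) $$ (r mod d2, c mod d2))"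
  unfolding id_tensor_def blk_def by (simp add: mult.commute)

lemma id_tensor_carrier[simp]: "id_tensor k d1 d2 \<Phi> M \<in> carrier_mat (k * d2) (k * d2)"
  by (simp add: id_tensor_def)
lemma id_tensor_dim[simp]: "dim_row (id_tensor k d1 d2 \<Phi> M) = k * d2" "dim_col (id_tensor k d1 d2 \<Phi> M) = k * d2"
  by (simp_all add: id_tensor_def)
lemma tensor_id_carrier[simp]: "tensor_id d1 d2 m \<Phi> M \<in> carrier_mat (d2 * m) (d2 * m)"
  by (simp add: tensor_id_def)
lemma tensor_id_dim[simp]: "dim_row (tensor_id d1 d2 m \<Phi> M) = d2 * m" "dim_col (tensor_id d1 d2 m \<Phi> M) = d2 * m"
  by (simp_all add: tensor_id_def)


lemma blk_id_tensor:
  assumes "a < k" "b < k" and ch: "\<forall>M \<in> carrier_mat d1 d1. \<Phi> M \<in> carrier_mat d2 d2"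
  shows "blk d2 (id_tensor k d1 d2 \<Phi> M) a b = \<Phi> (blk d1 M a b)"
proof -
  have c: "\<Phi> (blk d1 M a b) \<in> carrier_mat d2 d2" using ch by simp
  show ?thesis
  proof (rule eq_matI)
    fix i j assume ij: "i < dim_row (\<Phi> (blk d1 M a b))" "j < dim_col (\<Phi> (blk d1 M a b))"
    then have "i < d2" "j < d2" using c by auto
    moreover have "a * d2 + i < k * d2" "b * d2 + j < k * d2"
      using assms(1,2) \<open>i < d2\<close> \<open>j < d2\<close> by (simp_all add: idx_bound)
    ultimately show "blk d2 (id_tensor k d1 d2 \<Phi> M) a b $$ (i, j) = \<Phi> (blk d1 M a b) $$ (i, j)"
      by (simp add: id_tensor_blk)
  qed (use c in auto)
qed

lemma channel_comp:
  assumes F: "channel d1 d2 F" and G: "channel d2 d3 G"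
  shows "channel d1 d3 (G \<circ> F)"
proof -
  have Fc: "\<And>M. M \<in> carrier_mat d1 d1 \<Longrightarrow> F M \<in> carrier_mat d2 d2" using F by (simp add: channel_def)
  have Gc: "\<And>M. M \<in> carrier_mat d2 d2 \<Longrightarrow> G M \<in> carrier_mat d3 d3" using G by (simp add: channel_def)
  have idt: "id_tensor k d1 d3 (G \<circ> F) M = id_tensor k d2 d3 G (id_tensor k d1 d2 F M)" for k and M :: "complex mat"
  proof (rule eq_matI)
    fix i j assume "i < dim_row (id_tensor k d2 d3 G (id_tensor k d1 d2 F M))"
       "j < dim_col (id_tensor k d2 d3 G (id_tensor k d1 d2 F M))"
    then have ij: "i < k * d3" "j < k * d3" by auto
    then have "i div d3 < k" "j div d3 < k"
      by (auto simp add: less_mult_imp_div_less)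
    then have "blk d2 (id_tensor k d1 d2 F M) (i div d3) (j div d3) = F (blk d1 M (i div d3) (j div d3))"
      using Fc by (intro blk_id_tensor) auto
    then show "id_tensor k d1 d3 (G \<circ> F) M $$ (i, j) = id_tensor k d2 d3 G (id_tensor k d1 d2 F M) $$ (i, j)"
      using ij by (simp add: id_tensor_blk[of k d2 d3 G] id_tensor_blk[of k d1 d3])
  qed auto
  show ?thesis
    unfolding channel_def
  proof (intro conjI ballI allI impI)
    fix M :: "complex mat" assume "M \<in> carrier_mat d1 d1" then show "(G \<circ> F) M \<in> carrier_mat d3 d3" using Fc Gc by simp
  next
    fix M N :: "complex mat" assume "M \<in> carrier_mat d1 d1" "N \<in> carrier_mat d1 d1"
    then show "(G \<circ> F) (M + N) = (G \<circ> F) M + (G \<circ> F) N" using F G Fc by (simp add: channel_def)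
  next
    fix M :: "complex mat" and a :: complex assume "M \<in> carrier_mat d1 d1"
    then show "(G \<circ> F) (a \<cdot>\<^sub>m M) = a \<cdot>\<^sub>m (G \<circ> F) M" using F G Fc by (simp add: channel_def)
  next
    fix k and M :: "complex mat" assume "M \<in> carrier_mat (k * d1) (k * d1)" "psd M"
    then have "psd (id_tensor k d1 d2 F M)" using F by (simp add: channel_def)
    then have "psd (id_tensor k d2 d3 G (id_tensor k d1 d2 F M))" using G by (simp add: channel_def)
    then show "psd (id_tensor k d1 d3 (G \<circ> F) M)" by (simp add: idt)
  next
    fix M :: "complex mat" assume "M \<in> carrier_mat d1 d1"
    then show "mtrace ((G \<circ> F) M) = mtrace M" using F G Fc by (simp add: channel_def)
  qed
qed

lemma sum_split_mult: "(\<Sum>r<(a::nat) * d. f r) = (\<Sum>i<a. \<Sum>j<d. f (i * d + j))"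
proof (induction a)
  case 0 then show ?case by simp
next
  case (Suc a)
  have "(\<Sum>r<Suc a * d. f r) = (\<Sum>r<a * d. f r) + (\<Sum>r\<in>{a*d..<a*d+d}. f r)"
    by (simp add: sum.atLeastLessThan_concat[symmetric] lessThan_atLeast0 add.commute)
  also have "(\<Sum>r\<in>{a*d..<a*d+d}. f r) = (\<Sum>j<d. f (a * d + j))"
    by (rule sum.reindex_bij_witness[of _ "\<lambda>j. a*d+j" "\<lambda>r. r - a*d"]) auto
  finally show ?case using Suc by simp
qed

lemma blk_add: "a < k \<Longrightarrow> b < k \<Longrightarrow> M \<in> carrier_mat (k * d) (k * d) \<Longrightarrow> N \<in> carrier_mat (k * d) (k * d)
  \<Longrightarrow> blk d (M + N) a b = blk d M a b + blk d N a b"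
proof (rule eq_matI)
  fix i j assume "a < k" "b < k" "M \<in> carrier_mat (k * d) (k * d)" "N \<in> carrier_mat (k * d) (k * d)"
    "i < dim_row (blk d M a b + blk d N a b)" "j < dim_col (blk d M a b + blk d N a b)"
  moreover have "a * d + i < k * d" "b * d + j < k * d" using calculation
    by (simp_all add: idx_bound)
  ultimately show "blk d (M + N) a b $$ (i, j) = (blk d M a b + blk d N a b) $$ (i, j)" by simp
qed auto

lemma blk_smult: "a < k \<Longrightarrow> b < k \<Longrightarrow> M \<in> carrier_mat (k * d) (k * d) \<Longrightarrow>
  blk d (c \<cdot>\<^sub>m M) a b = c \<cdot>\<^sub>m blk d M a b"
  by (rule eq_matI) (auto simp: idx_bound)

lemma blk_blk: "i < a \<Longrightarrow> j < a \<Longrightarrow> blk d1 (blk (a * d1) M u v) i j = blk d1 M (u * a + i) (v * a + j)"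
proof (rule eq_matI)
  fix x y assume "i < a" "j < a" "x < dim_row (blk d1 M (u * a + i) (v * a + j))" "y < dim_col (blk d1 M (u * a + i) (v * a + j))"
  then have "x < d1" "y < d1" "i * d1 + x < a * d1" "j * d1 + y < a * d1" by (auto simp: idx_bound)
  then show "blk d1 (blk (a * d1) M u v) i j $$ (x, y) = blk d1 M (u * a + i) (v * a + j) $$ (x, y)"
    by (simp add: algebra_simps)
qed auto

lemma div_mod_combine: "(0::nat) < d \<Longrightarrow> r div (a * d) * a + r mod (a * d) div d = r div d"
proof -
  assume d: "0 < d"
  have "r mod (d * a) = d * (r div d mod a) + r mod d" by (rule mod_mult2_eq)
  then have "r mod (a * d) div d = r div d mod a" using d by (simp add: mult.commute)
  moreover have "r div (a * d) = r div d div a" by (metis div_mult2_eq mult.commute)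
  ultimately show ?thesis by simp
qed

lemma mod_mod_mult: "(r::nat) mod (a * d) mod d = r mod d"
  by (simp add: mod_mod_cancel)


lemma channel_id_tensor:
  assumes ch: "channel d1 d2 \<Phi>"
  shows "channel (a * d1) (a * d2) (id_tensor a d1 d2 \<Phi>)"
proof -
  have Pc: "\<And>M. M \<in> carrier_mat d1 d1 \<Longrightarrow> \<Phi> M \<in> carrier_mat d2 d2" using ch by (simp add: channel_def)
  have Padd: "\<And>M N. M \<in> carrier_mat d1 d1 \<Longrightarrow> N \<in> carrier_mat d1 d1 \<Longrightarrow> \<Phi> (M + N) = \<Phi> M + \<Phi> N"
    using ch by (simp add: channel_def)
  have Psm: "\<And>M c. M \<in> carrier_mat d1 d1 \<Longrightarrow> \<Phi> (c \<cdot>\<^sub>m M) = c \<cdot>\<^sub>m \<Phi> M"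
    using ch by (simp add: channel_def)
  have Ptr: "\<And>M. M \<in> carrier_mat d1 d1 \<Longrightarrow> mtrace (\<Phi> M) = mtrace M"
    using ch by (simp add: channel_def)
  have Pcp: "\<And>k M. M \<in> carrier_mat (k * d1) (k * d1) \<Longrightarrow> psd M \<Longrightarrow> psd (id_tensor k d1 d2 \<Phi> M)"
    using ch by (simp add: channel_def)
  have Pbd[simp]: "dim_row (\<Phi> (blk d1 X u v)) = d2" "dim_col (\<Phi> (blk d1 X u v)) = d2" for X u v
    using Pc[OF blk_carrier] by auto
  have rb: "r div d2 < a" if "r < a * d2" for r
    using that by (simp add: less_mult_imp_div_less)
  have idt: "id_tensor k (a * d1) (a * d2) (id_tensor a d1 d2 \<Phi>) M = id_tensor (k * a) d1 d2 \<Phi> M" for k and M :: "complex mat"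
  proof (rule eq_matI)
    fix r c assume "r < dim_row (id_tensor (k * a) d1 d2 \<Phi> M)" "c < dim_col (id_tensor (k * a) d1 d2 \<Phi> M)"
    then have rc: "r < k * (a * d2)" "c < k * (a * d2)" by (auto simp: mult.assoc)
    then have d2: "0 < d2" by (metis mult_is_0 not_less_zero gr0I)
    have m: "r mod (a * d2) < a * d2" "c mod (a * d2) < a * d2"
      using rc by (metis mod_less_divisor mult_is_0 not_less_zero gr0I)+
    have "id_tensor k (a * d1) (a * d2) (id_tensor a d1 d2 \<Phi>) M $$ (r, c)
      = \<Phi> (blk d1 (blk (a * d1) M (r div (a * d2)) (c div (a * d2))) (r mod (a * d2) div d2) (c mod (a * d2) div d2))
           $$ (r mod (a * d2) mod d2, c mod (a * d2) mod d2)"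
      using rc m by (simp add: id_tensor_blk[of k] id_tensor_blk[of a])
    also have "\<dots> = \<Phi> (blk d1 M (r div d2) (c div d2)) $$ (r mod d2, c mod d2)"
      using m rb d2 by (simp add: blk_blk div_mod_combine mod_mod_mult)
    also have "\<dots> = id_tensor (k * a) d1 d2 \<Phi> M $$ (r, c)"
      using rc by (simp add: id_tensor_blk[of "k * a"] mult.assoc)
    finally show "id_tensor k (a * d1) (a * d2) (id_tensor a d1 d2 \<Phi>) M $$ (r, c) = id_tensor (k * a) d1 d2 \<Phi> M $$ (r, c)" .
  qed (auto simp: mult.assoc)
  show ?thesis
    unfolding channel_def
  proof (intro conjI ballI allI impI)
    fix M :: "complex mat" assume "M \<in> carrier_mat (a * d1) (a * d1)"
    then show "id_tensor a d1 d2 \<Phi> M \<in> carrier_mat (a * d2) (a * d2)" by simp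
  next
    fix M N :: "complex mat" assume MN: "M \<in> carrier_mat (a * d1) (a * d1)" "N \<in> carrier_mat (a * d1) (a * d1)"
    show "id_tensor a d1 d2 \<Phi> (M + N) = id_tensor a d1 d2 \<Phi> M + id_tensor a d1 d2 \<Phi> N"
    proof (rule eq_matI)
      fix r c assume "r < dim_row (id_tensor a d1 d2 \<Phi> M + id_tensor a d1 d2 \<Phi> N)"
        "c < dim_col (id_tensor a d1 d2 \<Phi> M + id_tensor a d1 d2 \<Phi> N)"
      then have rc: "r < a * d2" "c < a * d2" by auto
      then have d2: "0 < d2" by (metis mult_is_0 not_less_zero gr0I)
      show "id_tensor a d1 d2 \<Phi> (M + N) $$ (r, c) = (id_tensor a d1 d2 \<Phi> M + id_tensor a d1 d2 \<Phi> N) $$ (r, c)"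
        using rc rb[OF rc(1)] rb[OF rc(2)] d2 MN Pc
        by (simp add: id_tensor_blk blk_add Padd)
    qed auto
  next
    fix M :: "complex mat" and c :: complex assume M: "M \<in> carrier_mat (a * d1) (a * d1)"
    show "id_tensor a d1 d2 \<Phi> (c \<cdot>\<^sub>m M) = c \<cdot>\<^sub>m id_tensor a d1 d2 \<Phi> M"
    proof (rule eq_matI)
      fix r s assume "r < dim_row (c \<cdot>\<^sub>m id_tensor a d1 d2 \<Phi> M)" "s < dim_col (c \<cdot>\<^sub>m id_tensor a d1 d2 \<Phi> M)"
      then have rc: "r < a * d2" "s < a * d2" by auto
      then have d2: "0 < d2" by (metis mult_is_0 not_less_zero gr0I)
      show "id_tensor a d1 d2 \<Phi> (c \<cdot>\<^sub>m M) $$ (r, s) = (c \<cdot>\<^sub>m id_tensor a d1 d2 \<Phi> M) $$ (r, s)"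
        using rc rb[OF rc(1)] rb[OF rc(2)] d2 M Pc
        by (simp add: id_tensor_blk blk_smult Psm)
    qed auto
  next
    fix k and M :: "complex mat" assume "M \<in> carrier_mat (k * (a * d1)) (k * (a * d1))" "psd M"
    then show "psd (id_tensor k (a * d1) (a * d2) (id_tensor a d1 d2 \<Phi>) M)"
      by (simp add: idt Pcp mult.assoc)
  next
    fix M :: "complex mat" assume M: "M \<in> carrier_mat (a * d1) (a * d1)"
    have "mtrace (id_tensor a d1 d2 \<Phi> M) = (\<Sum>r<a * d2. \<Phi> (blk d1 M (r div d2) (r div d2)) $$ (r mod d2, r mod d2))"
      by (simp add: mtrace_def id_tensor_blk)
    also have "\<dots> = (\<Sum>i<a. \<Sum>j<d2. \<Phi> (blk d1 M i i) $$ (j, j))"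
      by (simp add: sum_split_mult)
    also have "\<dots> = (\<Sum>i<a. mtrace (\<Phi> (blk d1 M i i)))"
      using Pc by (simp add: mtrace_def)
    also have "\<dots> = (\<Sum>i<a. mtrace (blk d1 M i i))"
      by (simp add: Ptr)
    also have "\<dots> = (\<Sum>i<a. \<Sum>j<d1. M $$ (i * d1 + j, i * d1 + j))"
      by (simp add: mtrace_def)
    also have "\<dots> = mtrace M"
      using M by (simp add: mtrace_def sum_split_mult)
    finally show "mtrace (id_tensor a d1 d2 \<Phi> M) = mtrace M" .
  qed
qed



lemma qf_eq: "M \<in> carrier_mat n n \<Longrightarrow> v \<in> carrier_vec n \<Longrightarrow>
  (\<Sum>i<n. cnj (v $ i) * (M *\<^sub>v v) $ i) = (\<Sum>i<n. \<Sum>j<n. cnj (v $ i) * (M $$ (i, j) * v $ j))"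
  by (simp add: scalar_prod_def row_def sum_distrib_left atLeast0LessThan)

lemma psd_perm:
  assumes N: "N \<in> carrier_mat n n" and P: "psd N"
    and pi: "\<forall>i<n. \<pi> i < n" "\<forall>i<n. \<psi> i < n" "\<forall>i<n. \<pi> (\<psi> i) = i" "\<forall>i<n. \<psi> (\<pi> i) = i"
  shows "psd (mat n n (\<lambda>(r, c). N $$ (\<pi> r, \<pi> c)))" (is "psd ?M")
  unfolding psd_def Let_def
proof (intro conjI ballI)
  show "dim_row ?M = dim_col ?M" by simp
next
  fix v :: "complex vec" assume v: "v \<in> carrier_vec (dim_row ?M)"
  then have vn: "v \<in> carrier_vec n" by simp
  define w where "w = vec n (\<lambda>k. v $ \<psi> k)"
  have wn: "w \<in> carrier_vec n" by (simp add: w_def)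
  have wv: "\<And>i. i < n \<Longrightarrow> w $ \<pi> i = v $ i" using pi by (simp add: w_def)
  have "(\<Sum>i<dim_row ?M. cnj (v $ i) * (?M *\<^sub>v v) $ i) = (\<Sum>i<n. \<Sum>j<n. cnj (v $ i) * (?M $$ (i, j) * v $ j))"
    using qf_eq[of ?M n v] vn by simp
  also have "\<dots> = (\<Sum>i<n. \<Sum>j<n. cnj (w $ \<pi> i) * (N $$ (\<pi> i, \<pi> j) * w $ \<pi> j))"
    by (simp add: wv)
  also have "\<dots> = (\<Sum>i<n. \<Sum>j<n. cnj (w $ i) * (N $$ (i, j) * w $ j))"
  proof -
    have inner: "(\<Sum>j<n. f (\<pi> j)) = (\<Sum>j<n. f j)" for f :: "nat \<Rightarrow> complex"
      by (rule sum.reindex_bij_witness[of _ \<psi> \<pi>]) (use pi in auto)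
    show ?thesis
      by (simp add: inner[of "\<lambda>j. cnj (w $ _) * (N $$ (_, j) * w $ j)"]
            inner[of "\<lambda>i. \<Sum>j<n. cnj (w $ i) * (N $$ (i, j) * w $ j)"])
  qed
  also have "\<dots> = (\<Sum>i<dim_row N. cnj (w $ i) * (N *\<^sub>v w) $ i)"
    using qf_eq[of N n w] N wn by simp
  finally have eq: "(\<Sum>i<dim_row ?M. cnj (v $ i) * (?M *\<^sub>v v) $ i) = (\<Sum>i<dim_row N. cnj (w $ i) * (N *\<^sub>v w) $ i)" .
  have "w \<in> carrier_vec (dim_row N)" using N wn by simp
  then have "Im (\<Sum>i<dim_row N. cnj (w $ i) * (N *\<^sub>v w) $ i) = 0 \<and> 0 \<le> Re (\<Sum>i<dim_row N. cnj (w $ i) * (N *\<^sub>v w) $ i)"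
    using P unfolding psd_def Let_def by blast
  then show "Im (\<Sum>i<dim_row ?M. cnj (v $ i) * (?M *\<^sub>v v) $ i) = 0"
     "0 \<le> Re (\<Sum>i<dim_row ?M. cnj (v $ i) * (?M *\<^sub>v v) $ i)" by (simp_all only: eq)
qed



lemma dm1: "(j::nat) < m \<Longrightarrow> (X * m + j) div m = X" "(j::nat) < m \<Longrightarrow> (X * m + j) mod m = j"
  by (simp_all add: add.commute)

lemma dm3:
  fixes u d i m j :: nat
  assumes "i < d" "j < m"
  shows "((u*d+i)*m+j) div m = u*d+i" "((u*d+i)*m+j) mod m = j"
    "((u*d+i)*m+j) div (d*m) = u" "((u*d+i)*m+j) mod (d*m) = i*m+j"
proof -
  show a: "((u*d+i)*m+j) div m = u*d+i" "((u*d+i)*m+j) mod m = j" using assms dm1 by auto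
  show "((u*d+i)*m+j) div (d*m) = u"
    using a assms by (metis div_mult2_eq mult.commute dm1)
  have "((u*d+i)*m+j) = (i*m+j) + u * (d*m)" by (simp add: algebra_simps)
  moreover have "i*m+j < d*m"
  proof -
    have "i*m+j < Suc i * m" using assms by simp
    also have "\<dots> \<le> d * m" using assms by (intro mult_le_mono1) simp
    finally show ?thesis .
  qed
  ultimately show "((u*d+i)*m+j) mod (d*m) = i*m+j" by (metis mod_mult_self2 mod_less mult.commute)
qed

lemma decomp:
  fixes r k d m :: nat
  assumes "r < k * (d * m)"
  obtains u i j where "u < k" "i < d" "j < m" "r = (u*d+i)*m+j"
proof -
  have m: "0 < m" "0 < d" using assms by (auto intro: gr0I)
  let ?u = "r div (d*m)" and ?i = "r div m mod d" and ?j = "r mod m"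
  have "r = (?u*d + ?i)*m + ?j"
    by (metis div_mult2_eq div_mult_mod_eq mult.commute)
  moreover have "?u < k" using assms by (simp add: less_mult_imp_div_less mult.commute)
  moreover have "?i < d" "?j < m" using m by auto
  ultimately show ?thesis using that by blast
qed

definition fperm :: "nat \<Rightarrow> nat \<Rightarrow> nat \<Rightarrow> nat" where
  "fperm d m s = (s div (d*m))*(d*m) + (s mod d)*m + (s div d) mod m"
definition gperm :: "nat \<Rightarrow> nat \<Rightarrow> nat \<Rightarrow> nat" where
  "gperm d m r = ((r div (d*m))*m + r mod m)*d + (r mod (d*m)) div m"

lemma gperm_eval: "i < d \<Longrightarrow> j < m \<Longrightarrow> gperm d m ((u*d+i)*m+j) = (u*m+j)*d+i"
  by (simp add: gperm_def dm3 dm1)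

lemma fperm_eval: "i < d \<Longrightarrow> j < m \<Longrightarrow> fperm d m ((u*m+j)*d+i) = (u*d+i)*m+j"
proof -
  assume a: "i < d" "j < m"
  have "((u*m+j)*d+i) div (d*m) = u" using dm3(3)[of j m i d u] a by (simp add: mult.commute)
  moreover have "((u*m+j)*d+i) mod d = i" "((u*m+j)*d+i) div d = u*m+j" using a dm1 by auto
  ultimately show ?thesis using a by (simp add: fperm_def dm1 algebra_simps)
qed

lemma lt3: "(u::nat) < k \<Longrightarrow> i < d \<Longrightarrow> j < m \<Longrightarrow> (u*d+i)*m+j < k*(d*m)"
proof -
  assume a: "u < k" "i < d" "j < m"
  have "u*d+i < k*d"
  proof -
    have "u*d+i < Suc u * d" using a by simp
    also have "\<dots> \<le> k * d" using a by (intro mult_le_mono1) simp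
    finally show ?thesis .
  qed
  then have "(u*d+i)*m+j < Suc (u*d+i) * m" using a by simp
  also have "\<dots> \<le> (k*d) * m" using \<open>u*d+i < k*d\<close> by (intro mult_le_mono1) simp
  finally show ?thesis by (simp add: mult.assoc)
qed

lemma perm_facts:
  fixes k d m :: nat
  shows "\<forall>s<k*(d*m). fperm d m s < k*(d*m)" "\<forall>s<k*(d*m). gperm d m s < k*(d*m)"
    "\<forall>s<k*(d*m). fperm d m (gperm d m s) = s" "\<forall>s<k*(d*m). gperm d m (fperm d m s) = s"
proof -
  have km: "k*(d*m) = k*(m*d)" by simp
  {
    fix s assume s: "s < k*(d*m)"
    obtain u i j where uij: "u < k" "i < d" "j < m" "s = (u*d+i)*m+j" using decomp[OF s] by blast
    have "gperm d m s = (u*m+j)*d+i" using uij gperm_eval by simp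
    moreover have "(u*m+j)*d+i < k*(d*m)" using lt3[of u k j m i d] uij by (simp add: mult.commute)
    moreover have "fperm d m ((u*m+j)*d+i) = s" using uij fperm_eval by simp
    ultimately have "gperm d m s < k*(d*m)" "fperm d m (gperm d m s) = s" by auto
  } note A = this
  {
    fix s assume s: "s < k*(d*m)"
    then have s': "s < k*(m*d)" by (simp add: mult.commute)
    obtain u j i where uij: "u < k" "j < m" "i < d" "s = (u*m+j)*d+i" using decomp[OF s'] by blast
    have "fperm d m s = (u*d+i)*m+j" using uij fperm_eval by simp
    moreover have "(u*d+i)*m+j < k*(d*m)" using lt3 uij by simp
    moreover have "gperm d m ((u*d+i)*m+j) = s" using uij gperm_eval by simp
    ultimately have "fperm d m s < k*(d*m)" "gperm d m (fperm d m s) = s" by auto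
  } note B = this
  show "\<forall>s<k*(d*m). fperm d m s < k*(d*m)" "\<forall>s<k*(d*m). gperm d m s < k*(d*m)"
    "\<forall>s<k*(d*m). fperm d m (gperm d m s) = s" "\<forall>s<k*(d*m). gperm d m (fperm d m s) = s"
    using A B by auto
qed



definition tblk :: "nat \<Rightarrow> nat \<Rightarrow> complex mat \<Rightarrow> nat \<Rightarrow> nat \<Rightarrow> complex mat" where
  "tblk m d M j j' = mat d d (\<lambda>(x, y). M $$ (x * m + j, y * m + j'))"

lemma tblk_dim[simp]: "dim_row (tblk m d M j j') = d" "dim_col (tblk m d M j j') = d"
  "tblk m d M j j' \<in> carrier_mat d d"
  by (simp_all add: tblk_def)

lemma tblk_index[simp]: "x < d \<Longrightarrow> y < d \<Longrightarrow> tblk m d M j j' $$ (x, y) = M $$ (x * m + j, y * m + j')"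
  by (simp add: tblk_def)

lemma tensor_id_tblk: "tensor_id d1 d2 m \<Psi> M = mat (d2 * m) (d2 * m)
   (\<lambda>(r, c). \<Psi> (tblk m d1 M (r mod m) (c mod m)) $$ (r div m, c div m))"
  by (simp add: tensor_id_def tblk_def)

lemma tblk_add: "j < m \<Longrightarrow> j' < m \<Longrightarrow> M \<in> carrier_mat (d * m) (d * m) \<Longrightarrow> N \<in> carrier_mat (d * m) (d * m)
  \<Longrightarrow> tblk m d (M + N) j j' = tblk m d M j j' + tblk m d N j j'"
  by (rule eq_matI) (auto simp: idx_bound)

lemma tblk_smult: "j < m \<Longrightarrow> j' < m \<Longrightarrow> M \<in> carrier_mat (d * m) (d * m)
  \<Longrightarrow> tblk m d (c \<cdot>\<^sub>m M) j j' = c \<cdot>\<^sub>m tblk m d M j j'"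
  by (rule eq_matI) (auto simp: idx_bound)

lemma channel_tensor_id:
  assumes ch: "channel d1 d2 \<Psi>" and m: "0 < m"
  shows "channel (d1 * m) (d2 * m) (tensor_id d1 d2 m \<Psi>)"
proof -
  have Pc: "\<And>M. M \<in> carrier_mat d1 d1 \<Longrightarrow> \<Psi> M \<in> carrier_mat d2 d2" using ch by (simp add: channel_def)
  have Padd: "\<And>M N. M \<in> carrier_mat d1 d1 \<Longrightarrow> N \<in> carrier_mat d1 d1 \<Longrightarrow> \<Psi> (M + N) = \<Psi> M + \<Psi> N"
    using ch by (simp add: channel_def)
  have Psm: "\<And>M c. M \<in> carrier_mat d1 d1 \<Longrightarrow> \<Psi> (c \<cdot>\<^sub>m M) = c \<cdot>\<^sub>m \<Psi> M"
    using ch by (simp add: channel_def)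
  have Ptr: "\<And>M. M \<in> carrier_mat d1 d1 \<Longrightarrow> mtrace (\<Psi> M) = mtrace M"
    using ch by (simp add: channel_def)
  have Pcp: "\<And>k M. M \<in> carrier_mat (k * d1) (k * d1) \<Longrightarrow> psd M \<Longrightarrow> psd (id_tensor k d1 d2 \<Psi> M)"
    using ch by (simp add: channel_def)
  have Pbd[simp]: "dim_row (\<Psi> (tblk m d1 X u v)) = d2" "dim_col (\<Psi> (tblk m d1 X u v)) = d2" for X u v
    using Pc[OF tblk_dim(3)[of m d1 X u v]] by auto
  have Pbd2[simp]: "dim_row (\<Psi> (blk d1 X u v)) = d2" "dim_col (\<Psi> (blk d1 X u v)) = d2" for X u v
    using Pc[OF blk_carrier] by auto
  have cp: "psd (id_tensor k (d1 * m) (d2 * m) (tensor_id d1 d2 m \<Psi>) M)"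
    if M: "M \<in> carrier_mat (k * (d1 * m)) (k * (d1 * m))" and pM: "psd M" for k and M :: "complex mat"
  proof -
    define n1 where "n1 = k * (d1 * m)"
    define n2 where "n2 = k * (d2 * m)"
    define M' where "M' = mat n1 n1 (\<lambda>(r, c). M $$ (fperm d1 m r, fperm d1 m c))"
    have pM': "psd M'" unfolding M'_def
      by (rule psd_perm[where \<psi>="gperm d1 m"]) (use M pM perm_facts[of k d1 m] in \<open>auto simp: n1_def\<close>)
    have M'c: "M' \<in> carrier_mat ((k * m) * d1) ((k * m) * d1)" by (simp add: M'_def n1_def ac_simps)
    define Q where "Q = id_tensor (k * m) d1 d2 \<Psi> M'"
    have pQ: "psd Q" unfolding Q_def using Pcp[OF M'c pM'] .
    have n2e: "n2 = (k * m) * d2" by (simp add: n2_def ac_simps)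
    have Qc: "Q \<in> carrier_mat n2 n2" unfolding Q_def n2e by (rule id_tensor_carrier)
    define R where "R = mat n2 n2 (\<lambda>(r, c). Q $$ (gperm d2 m r, gperm d2 m c))"
    have pR: "psd R" unfolding R_def
      by (rule psd_perm[where \<psi>="fperm d2 m"]) (use Qc pQ perm_facts[of k d2 m] in \<open>auto simp: n2_def\<close>)
    have "id_tensor k (d1 * m) (d2 * m) (tensor_id d1 d2 m \<Psi>) M = R"
    proof (rule eq_matI)
      fix r c assume "r < dim_row R" "c < dim_col R"
      then have rc: "r < k * (d2 * m)" "c < k * (d2 * m)" by (auto simp: R_def n2_def)
      obtain u i j where r: "u < k" "i < d2" "j < m" "r = (u*d2+i)*m+j" using decomp[OF rc(1)] by blast
      obtain u' i' j' where c: "u' < k" "i' < d2" "j' < m" "c = (u'*d2+i')*m+j'" using decomp[OF rc(2)] by blast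
      have im: "i*m+j < d2*m" "i'*m+j' < d2*m" using r c by (simp_all add: idx_bound)
      have "id_tensor k (d1 * m) (d2 * m) (tensor_id d1 d2 m \<Psi>) M $$ (r, c)
         = tensor_id d1 d2 m \<Psi> (blk (d1 * m) M u u') $$ (i*m+j, i'*m+j')"
        using rc r c by (simp add: id_tensor_blk[of k] dm3)
      also have "\<dots> = \<Psi> (tblk m d1 (blk (d1 * m) M u u') j j') $$ (i, i')"
        using im r c by (simp add: tensor_id_tblk dm1)
      also have "tblk m d1 (blk (d1 * m) M u u') j j' = blk d1 M' (u*m+j) (u'*m+j')"
      proof (rule eq_matI)
        fix x y assume "x < dim_row (blk d1 M' (u*m+j) (u'*m+j'))" "y < dim_col (blk d1 M' (u*m+j) (u'*m+j'))"
        then have xy: "x < d1" "y < d1" by auto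
        have b1: "(u*m+j)*d1+x < n1" "(u'*m+j')*d1+y < n1"
          using lt3[of u k j m x d1] lt3[of u' k j' m y d1] r c xy by (simp_all add: n1_def ac_simps)
        have b2: "x*m+j < d1*m" "y*m+j' < d1*m" using xy r c by (simp_all add: idx_bound)
        show "tblk m d1 (blk (d1 * m) M u u') j j' $$ (x, y) = blk d1 M' (u*m+j) (u'*m+j') $$ (x, y)"
        proof -
          have "blk d1 M' (u*m+j) (u'*m+j') $$ (x, y) = M $$ (fperm d1 m ((u*m+j)*d1+x), fperm d1 m ((u'*m+j')*d1+y))"
            using xy b1 by (simp add: M'_def)
          also have "\<dots> = M $$ ((u*d1+x)*m+j, (u'*d1+y)*m+j')" using xy r c by (simp add: fperm_eval)
          also have "\<dots> = tblk m d1 (blk (d1 * m) M u u') j j' $$ (x, y)" using xy b2 by (simp add: algebra_simps)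
          finally show ?thesis by simp
        qed
      qed auto
      also have "\<Psi> (blk d1 M' (u*m+j) (u'*m+j')) $$ (i, i') = Q $$ ((u*m+j)*d2+i, (u'*m+j')*d2+i')"
      proof -
        have "(u*m+j)*d2+i < (k*m)*d2" "(u'*m+j')*d2+i' < (k*m)*d2"
          using lt3[of u k j m i d2] lt3[of u' k j' m i' d2] r c by (simp_all add: ac_simps)
        then show ?thesis using r c by (simp add: Q_def id_tensor_blk[of "k*m"] dm1)
      qed
      also have "\<dots> = R $$ (r, c)"
        using rc r c by (simp add: R_def n2_def gperm_eval)
      finally show "id_tensor k (d1 * m) (d2 * m) (tensor_id d1 d2 m \<Psi>) M $$ (r, c) = R $$ (r, c)" .
    qed (auto simp: R_def n2_def)
    then show ?thesis using pR by simp
  qed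
  show ?thesis
    unfolding channel_def
  proof (intro conjI ballI allI impI)
    fix M :: "complex mat" assume "M \<in> carrier_mat (d1 * m) (d1 * m)"
    then show "tensor_id d1 d2 m \<Psi> M \<in> carrier_mat (d2 * m) (d2 * m)" by simp
  next
    fix M N :: "complex mat" assume MN: "M \<in> carrier_mat (d1 * m) (d1 * m)" "N \<in> carrier_mat (d1 * m) (d1 * m)"
    show "tensor_id d1 d2 m \<Psi> (M + N) = tensor_id d1 d2 m \<Psi> M + tensor_id d1 d2 m \<Psi> N"
    proof (rule eq_matI)
      fix r c assume "r < dim_row (tensor_id d1 d2 m \<Psi> M + tensor_id d1 d2 m \<Psi> N)"
        "c < dim_col (tensor_id d1 d2 m \<Psi> M + tensor_id d1 d2 m \<Psi> N)"
      then have rc: "r < d2 * m" "c < d2 * m" by auto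
      then have "r div m < d2" "c div m < d2" by (auto simp: less_mult_imp_div_less)
      then show "tensor_id d1 d2 m \<Psi> (M + N) $$ (r, c) = (tensor_id d1 d2 m \<Psi> M + tensor_id d1 d2 m \<Psi> N) $$ (r, c)"
        using rc m MN by (simp add: tensor_id_tblk tblk_add Padd)
    qed auto
  next
    fix M :: "complex mat" and a :: complex assume M: "M \<in> carrier_mat (d1 * m) (d1 * m)"
    show "tensor_id d1 d2 m \<Psi> (a \<cdot>\<^sub>m M) = a \<cdot>\<^sub>m tensor_id d1 d2 m \<Psi> M"
    proof (rule eq_matI)
      fix r c assume "r < dim_row (a \<cdot>\<^sub>m tensor_id d1 d2 m \<Psi> M)" "c < dim_col (a \<cdot>\<^sub>m tensor_id d1 d2 m \<Psi> M)"
      then have rc: "r < d2 * m" "c < d2 * m" by auto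
      then have "r div m < d2" "c div m < d2" by (auto simp: less_mult_imp_div_less)
      then show "tensor_id d1 d2 m \<Psi> (a \<cdot>\<^sub>m M) $$ (r, c) = (a \<cdot>\<^sub>m tensor_id d1 d2 m \<Psi> M) $$ (r, c)"
        using rc m M by (simp add: tensor_id_tblk tblk_smult Psm)
    qed auto
  next
    fix k and M :: "complex mat" assume "M \<in> carrier_mat (k * (d1 * m)) (k * (d1 * m))" "psd M"
    then show "psd (id_tensor k (d1 * m) (d2 * m) (tensor_id d1 d2 m \<Psi>) M)" by (rule cp)
  next
    fix M :: "complex mat" assume M: "M \<in> carrier_mat (d1 * m) (d1 * m)"
    have "mtrace (tensor_id d1 d2 m \<Psi> M) = (\<Sum>r<d2 * m. \<Psi> (tblk m d1 M (r mod m) (r mod m)) $$ (r div m, r div m))"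
      by (simp add: mtrace_def tensor_id_tblk)
    also have "\<dots> = (\<Sum>i<d2. \<Sum>j<m. \<Psi> (tblk m d1 M j j) $$ (i, i))"
      by (simp add: sum_split_mult dm1)
    also have "\<dots> = (\<Sum>j<m. \<Sum>i<d2. \<Psi> (tblk m d1 M j j) $$ (i, i))"
      by (rule sum.swap)
    also have "\<dots> = (\<Sum>j<m. mtrace (\<Psi> (tblk m d1 M j j)))"
      by (simp add: mtrace_def)
    also have "\<dots> = (\<Sum>j<m. mtrace (tblk m d1 M j j))"
      by (simp add: Ptr)
    also have "\<dots> = (\<Sum>j<m. \<Sum>x<d1. M $$ (x * m + j, x * m + j))"
      by (simp add: mtrace_def)
    also have "\<dots> = (\<Sum>x<d1. \<Sum>j<m. M $$ (x * m + j, x * m + j))"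
      by (rule sum.swap)
    also have "\<dots> = mtrace M"
      using M by (simp add: mtrace_def sum_split_mult)
    finally show "mtrace (tensor_id d1 d2 m \<Psi> M) = mtrace M" .
  qed
qed



fun Tn :: "nat \<Rightarrow> nat \<Rightarrow> nat \<Rightarrow> (complex mat \<Rightarrow> complex mat) \<Rightarrow> complex mat \<Rightarrow> complex mat" where
  "Tn 0 dV dR \<Psi> M = M"
| "Tn (Suc n) dV dR \<Psi> M = tensor_id dV dR (dR ^ n) \<Psi> (id_tensor dV (dV ^ n) (dR ^ n) (Tn n dV dR \<Psi>) M)"

lemma channel_id1: "channel 1 1 (\<lambda>M. M)"
  unfolding channel_def
proof (intro conjI ballI allI impI)
  fix k and M :: "complex mat" assume M: "M \<in> carrier_mat (k * 1) (k * 1)" "psd M"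
  have "id_tensor k 1 1 (\<lambda>M. M) M = M"
    by (rule eq_matI) (use M in \<open>auto simp: id_tensor_blk\<close>)
  then show "psd (id_tensor k 1 1 (\<lambda>M. M) M)" using M by simp
qed auto

lemma channel_Tn:
  assumes ch: "channel dV dR \<Psi>" and dR: "0 < dR"
  shows "channel (dV ^ n) (dR ^ n) (Tn n dV dR \<Psi>)"
proof (induction n)
  case 0
  have "Tn 0 dV dR \<Psi> = (\<lambda>M. M)" by (rule ext) simp
  then show ?case using channel_id1 by simp
next
  case (Suc n)
  have e: "Tn (Suc n) dV dR \<Psi> = tensor_id dV dR (dR ^ n) \<Psi> \<circ> id_tensor dV (dV ^ n) (dR ^ n) (Tn n dV dR \<Psi>)"
    by (rule ext) simp
  have c1: "channel (dV * dV ^ n) (dV * dR ^ n) (id_tensor dV (dV ^ n) (dR ^ n) (Tn n dV dR \<Psi>))"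
    by (rule channel_id_tensor[OF Suc])
  have c2: "channel (dV * dR ^ n) (dR * dR ^ n) (tensor_id dV dR (dR ^ n) \<Psi>)"
    by (rule channel_tensor_id[OF ch]) (use dR in simp)
  have "channel (dV * dV ^ n) (dR * dR ^ n) (Tn (Suc n) dV dR \<Psi>)"
    unfolding e by (rule channel_comp[OF c1 c2])
  then show ?case by (simp only: power_Suc)
qed

lemma kron_dim[simp]: "dim_row (kron A B) = dim_row A * dim_row B" "dim_col (kron A B) = dim_col A * dim_col B"
  by (simp_all add: kron_def)

lemma kron_index: "i < dim_row A * dim_row B \<Longrightarrow> j < dim_col A * dim_col B \<Longrightarrow>
  kron A B $$ (i, j) = A $$ (i div dim_row B, j div dim_col B) * B $$ (i mod dim_row B, j mod dim_col B)"
  by (simp add: kron_def)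

lemma id_tensor_kron:
  assumes Fc: "\<forall>M \<in> carrier_mat d1 d1. F M \<in> carrier_mat d2 d2"
    and Fs: "\<forall>M \<in> carrier_mat d1 d1. \<forall>a::complex. F (a \<cdot>\<^sub>m M) = a \<cdot>\<^sub>m F M"
    and A: "A \<in> carrier_mat a a" and B: "B \<in> carrier_mat d1 d1"
  shows "id_tensor a d1 d2 F (kron A B) = kron A (F B)"
proof -
  have FB: "F B \<in> carrier_mat d2 d2" using Fc B by blast
  have bl: "blk d1 (kron A B) i j = A $$ (i, j) \<cdot>\<^sub>m B" if "i < a" "j < a" for i j
    by (rule eq_matI) (use that A B in \<open>auto simp: kron_index idx_bound\<close>)
  show ?thesis
  proof (rule eq_matI)
    fix r c assume "r < dim_row (kron A (F B))" "c < dim_col (kron A (F B))"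
    then have rc: "r < a * d2" "c < a * d2" using A FB by auto
    then have "r div d2 < a" "c div d2 < a" by (auto simp: less_mult_imp_div_less)
    moreover have "0 < d2" using rc by (auto intro: gr0I)
    ultimately show "id_tensor a d1 d2 F (kron A (B)) $$ (r, c) = kron A (F B) $$ (r, c)"
      using rc A B FB Fs by (simp add: id_tensor_blk bl kron_index)
  qed (use A FB in auto)
qed

lemma tensor_id_kron:
  assumes Fc: "\<forall>M \<in> carrier_mat d1 d1. F M \<in> carrier_mat d2 d2"
    and Fs: "\<forall>M \<in> carrier_mat d1 d1. \<forall>a::complex. F (a \<cdot>\<^sub>m M) = a \<cdot>\<^sub>m F M"
    and A: "A \<in> carrier_mat d1 d1" and C: "C \<in> carrier_mat m m" and m: "0 < m"
  shows "tensor_id d1 d2 m F (kron A C) = kron (F A) C"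
proof -
  have FA: "F A \<in> carrier_mat d2 d2" using Fc A by blast
  have bl: "tblk m d1 (kron A C) j j' = C $$ (j, j') \<cdot>\<^sub>m A" if "j < m" "j' < m" for j j'
    by (rule eq_matI) (use that A C in \<open>auto simp: kron_index idx_bound dm1\<close>)
  show ?thesis
  proof (rule eq_matI)
    fix r c assume "r < dim_row (kron (F A) C)" "c < dim_col (kron (F A) C)"
    then have rc: "r < d2 * m" "c < d2 * m" using C FA by auto
    then have "r div m < d2" "c div m < d2" by (auto simp: less_mult_imp_div_less)
    then show "tensor_id d1 d2 m F (kron A C) $$ (r, c) = kron (F A) C $$ (r, c)"
      using rc A C FA Fs m by (simp add: tensor_id_tblk bl kron_index mult.commute)
  qed (use C FA in auto)
qed

lemma Tn_kron:
  assumes ch: "channel dV dR \<Psi>" and dR: "0 < dR"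
    and A: "A \<in> carrier_mat dV dV" and B: "B \<in> carrier_mat (dV ^ n) (dV ^ n)"
  shows "Tn (Suc n) dV dR \<Psi> (kron A B) = kron (\<Psi> A) (Tn n dV dR \<Psi> B)"
proof -
  have cn: "channel (dV ^ n) (dR ^ n) (Tn n dV dR \<Psi>)" by (rule channel_Tn[OF ch dR])
  have TB: "Tn n dV dR \<Psi> B \<in> carrier_mat (dR ^ n) (dR ^ n)" using cn B by (simp add: channel_def)
  have "id_tensor dV (dV ^ n) (dR ^ n) (Tn n dV dR \<Psi>) (kron A B) = kron A (Tn n dV dR \<Psi> B)"
    by (rule id_tensor_kron) (use cn A B in \<open>auto simp: channel_def\<close>)
  moreover have "tensor_id dV dR (dR ^ n) \<Psi> (kron A (Tn n dV dR \<Psi> B)) = kron (\<Psi> A) (Tn n dV dR \<Psi> B)"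
    by (rule tensor_id_kron) (use ch A TB dR in \<open>auto simp: channel_def\<close>)
  ultimately show ?thesis by simp
qed



lemma digit_Suc0: "digit (Suc n) b m 0 = m div b ^ n mod b"
  by (simp add: digit_def)

lemma digit_SucS:
  assumes "t < n"
  shows "digit (Suc n) b m (Suc t) = digit n b (m mod b ^ n) t"
proof -
  define c where "c = b ^ (n - 1 - t)"
  have nn: "n = (n - 1 - t) + Suc t" using assms by simp
  have "b ^ n = b ^ (n - 1 - t) * b ^ Suc t" by (subst nn) (rule power_add)
  then have bn: "b ^ n = c * (b * b ^ t)" by (simp add: c_def)
  have "m mod (c * (b * b ^ t)) = c * (m div c mod (b * b ^ t)) + m mod c" by (rule mod_mult2_eq)
  then have "m mod (c * (b * b ^ t)) div c = m div c mod (b * b ^ t)"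
    by (cases "c = 0") (simp_all add: add.commute)
  then have "(m mod b ^ n) div c mod b = m div c mod b"
    by (simp add: bn mod_mod_cancel)
  then show ?thesis by (simp add: digit_def c_def)
qed

lemma reorder_idx_Suc:
  assumes dA: "0 < dA" and dX: "0 < dX"
  shows "reorder_idx (Suc n) dA dX r =
    ((r div dX ^ Suc n) div dA ^ n mod dA * dX + (r mod dX ^ Suc n) div dX ^ n mod dX) * (dA * dX) ^ n
    + reorder_idx n dA dX (((r div dX ^ Suc n) mod dA ^ n) * dX ^ n + (r mod dX ^ Suc n) mod dX ^ n)"
proof -
  define A where "A = r div dX ^ Suc n"
  define X where "X = r mod dX ^ Suc n"
  define r' where "r' = (A mod dA ^ n) * dX ^ n + X mod dX ^ n"
  have xp: "0 < dX ^ n" using dX by simp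
  have r'1: "r' div dX ^ n = A mod dA ^ n" and r'2: "r' mod dX ^ n = X mod dX ^ n"
    using xp by (simp_all add: r'_def dm1)
  have "reorder_idx (Suc n) dA dX r =
     (\<Sum>t<Suc n. (digit (Suc n) dA A t * dX + digit (Suc n) dX X t) * (dA * dX) ^ (Suc n - 1 - t))"
    by (simp add: reorder_idx_def A_def X_def)
  also have "\<dots> = (digit (Suc n) dA A 0 * dX + digit (Suc n) dX X 0) * (dA * dX) ^ n
      + (\<Sum>t<n. (digit (Suc n) dA A (Suc t) * dX + digit (Suc n) dX X (Suc t)) * (dA * dX) ^ (n - 1 - t))"
    by (simp only: sum.lessThan_Suc_shift) simp
  also have "(\<Sum>t<n. (digit (Suc n) dA A (Suc t) * dX + digit (Suc n) dX X (Suc t)) * (dA * dX) ^ (n - 1 - t))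
     = (\<Sum>t<n. (digit n dA (A mod dA ^ n) t * dX + digit n dX (X mod dX ^ n) t) * (dA * dX) ^ (n - 1 - t))"
    by (rule sum.cong) (simp_all add: digit_SucS)
  also have "\<dots> = reorder_idx n dA dX r'"
    by (simp add: reorder_idx_def r'1 r'2)
  finally show ?thesis by (simp add: digit_Suc0 A_def X_def r'_def)
qed

lemma reorder_idx_bound:
  assumes dA: "0 < dA" and dX: "0 < dX"
  shows "reorder_idx n dA dX r < (dA * dX) ^ n"
proof (induction n arbitrary: r)
  case 0 then show ?case by (simp add: reorder_idx_def)
next
  case (Suc n)
  let ?q = "(r div dX ^ Suc n) div dA ^ n mod dA * dX + (r mod dX ^ Suc n) div dX ^ n mod dX"
  let ?R = "reorder_idx n dA dX (((r div dX ^ Suc n) mod dA ^ n) * dX ^ n + (r mod dX ^ Suc n) mod dX ^ n)"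
  have q: "?q < dA * dX" using dA dX by (intro idx_bound) auto
  have "?q * (dA * dX) ^ n + ?R < (dA * dX) * (dA * dX) ^ n"
    by (rule idx_bound[OF q Suc.IH])
  then show ?case by (simp add: reorder_idx_Suc[OF dA dX])
qed

lemma reorder_idx_Suc':
  assumes dA: "0 < dA" and dX: "0 < dX" and a: "a < dA ^ Suc n" and x: "x < dX ^ Suc n"
  shows "reorder_idx (Suc n) dA dX (a * dX ^ Suc n + x) =
    ((a div dA ^ n) * dX + x div dX ^ n) * (dA * dX) ^ n + reorder_idx n dA dX ((a mod dA ^ n) * dX ^ n + x mod dX ^ n)"
proof -
  have "a div dA ^ n < dA" using a by (simp add: less_mult_imp_div_less mult.commute)
  moreover have "x div dX ^ n < dX" using x by (simp add: less_mult_imp_div_less mult.commute)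
  moreover have "(a * dX ^ Suc n + x) div dX ^ Suc n = a" "(a * dX ^ Suc n + x) mod dX ^ Suc n = x"
    using x by (simp_all add: dm1)
  ultimately show ?thesis by (simp add: reorder_idx_Suc[OF dA dX])
qed


lemma kron_pow_carrier: "M \<in> carrier_mat D D \<Longrightarrow> kron_pow n M \<in> carrier_mat (D ^ n) (D ^ n)"
  by (induction n) (auto simp: kron_def)

lemma prep_carrier[simp]: "prep_state K p \<sigma> dX \<in> carrier_mat (K * dX) (K * dX)"
  by (simp add: prep_state_def)

lemma blk_prep:
  assumes i: "i < K" and j: "j < K" and sc: "\<forall>k<K. \<sigma> k \<in> carrier_mat dX dX"
  shows "blk dX (prep_state K p \<sigma> dX) i j = (if i = j then complex_of_real (p i) \<cdot>\<^sub>m \<sigma> i else 0\<^sub>m dX dX)"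
proof (rule eq_matI)
  fix x y assume "x < dim_row (if i = j then complex_of_real (p i) \<cdot>\<^sub>m \<sigma> i else 0\<^sub>m dX dX)"
    "y < dim_col (if i = j then complex_of_real (p i) \<cdot>\<^sub>m \<sigma> i else 0\<^sub>m dX dX)"
  then have xy: "x < dX" "y < dX" using sc i by (auto split: if_splits)
  have b: "i * dX + x < K * dX" "j * dX + y < K * dX" using xy i j by (simp_all add: idx_bound)
  have ke: "kron (ketbra K k) (\<sigma> k) $$ (i * dX + x, j * dX + y) = (if i = k \<and> j = k then \<sigma> k $$ (x, y) else 0)"
    if k: "k < K" for k
  proof -
    have kd: "dim_row (ketbra K k) = K" "dim_col (ketbra K k) = K" by (simp_all add: ketbra_def)
    have sd: "dim_row (\<sigma> k) = dX" "dim_col (\<sigma> k) = dX" using sc k by auto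
    have "kron (ketbra K k) (\<sigma> k) $$ (i * dX + x, j * dX + y) = ketbra K k $$ (i, j) * \<sigma> k $$ (x, y)"
      using kron_index[of "i * dX + x" "ketbra K k" "\<sigma> k" "j * dX + y"] b xy by (simp add: kd sd dm1)
    also have "\<dots> = (if i = k \<and> j = k then \<sigma> k $$ (x, y) else 0)"
      using i j by (simp add: ketbra_def)
    finally show ?thesis .
  qed
  have "blk dX (prep_state K p \<sigma> dX) i j $$ (x, y) =
     (\<Sum>k<K. complex_of_real (p k) * kron (ketbra K k) (\<sigma> k) $$ (i * dX + x, j * dX + y))"
    using xy b by (simp add: prep_state_def)
  also have "\<dots> = (\<Sum>k<K. (if i = k \<and> j = k then complex_of_real (p k) * \<sigma> k $$ (x, y) else 0))"
    by (rule sum.cong) (simp_all add: ke)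
  also have "\<dots> = (if i = j then complex_of_real (p i) * \<sigma> i $$ (x, y) else 0)"
  proof (cases "i = j")
    case True then show ?thesis using i by (simp add: sum.delta sum.delta')
  next
    case False then show ?thesis by (simp, intro sum.neutral) auto
  qed
  also have "\<dots> = (if i = j then complex_of_real (p i) \<cdot>\<^sub>m \<sigma> i else 0\<^sub>m dX dX) $$ (x, y)"
    using sc i xy by auto
  finally show "blk dX (prep_state K p \<sigma> dX) i j $$ (x, y) = (if i = j then complex_of_real (p i) \<cdot>\<^sub>m \<sigma> i else 0\<^sub>m dX dX) $$ (x, y)" .
qed (use sc i in auto)



definition Pn :: "nat \<Rightarrow> nat \<Rightarrow> (nat \<Rightarrow> real) \<Rightarrow> (nat \<Rightarrow> complex mat) \<Rightarrow> nat \<Rightarrow> complex mat" where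
  "Pn n K p \<sigma> dX = reorder n K dX (kron_pow n (prep_state K p \<sigma> dX))"

lemma Pn_index: "r < (K * dX) ^ n \<Longrightarrow> c < (K * dX) ^ n \<Longrightarrow>
  Pn n K p \<sigma> dX $$ (r, c) = kron_pow n (prep_state K p \<sigma> dX) $$ (reorder_idx n K dX r, reorder_idx n K dX c)"
  by (simp add: Pn_def reorder_def)

lemma Pn_dim[simp]: "dim_row (Pn n K p \<sigma> dX) = (K * dX) ^ n" "dim_col (Pn n K p \<sigma> dX) = (K * dX) ^ n"
  by (simp_all add: Pn_def reorder_def)

lemma blk_Pn_Suc:
  assumes K: "0 < K" and dX: "0 < dX" and a: "a < K ^ Suc n" and b: "b < K ^ Suc n"
  shows "blk (dX ^ Suc n) (Pn (Suc n) K p \<sigma> dX) a b =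
    kron (blk dX (prep_state K p \<sigma> dX) (a div K ^ n) (b div K ^ n)) (blk (dX ^ n) (Pn n K p \<sigma> dX) (a mod K ^ n) (b mod K ^ n))"
proof (rule eq_matI)
  let ?P = "prep_state K p \<sigma> dX"
  let ?KP = "kron_pow n ?P"
  have KPc: "?KP \<in> carrier_mat ((K * dX) ^ n) ((K * dX) ^ n)" by (rule kron_pow_carrier) simp
  have B: "0 < (K * dX) ^ n" using K dX by simp
  fix x y assume "x < dim_row (kron (blk dX ?P (a div K ^ n) (b div K ^ n)) (blk (dX ^ n) (Pn n K p \<sigma> dX) (a mod K ^ n) (b mod K ^ n)))"
    "y < dim_col (kron (blk dX ?P (a div K ^ n) (b div K ^ n)) (blk (dX ^ n) (Pn n K p \<sigma> dX) (a mod K ^ n) (b mod K ^ n)))"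
  then have x: "x < dX ^ Suc n" and y: "y < dX ^ Suc n" by auto
  have xb: "a * dX ^ Suc n + x < (K * dX) ^ Suc n" "b * dX ^ Suc n + y < (K * dX) ^ Suc n"
    using idx_bound[OF a x] idx_bound[OF b y] by (simp_all only: power_mult_distrib)
  define q where "q = (a div K ^ n) * dX + x div dX ^ n"
  define q' where "q' = (b div K ^ n) * dX + y div dX ^ n"
  define x' where "x' = (a mod K ^ n) * dX ^ n + x mod dX ^ n"
  define y' where "y' = (b mod K ^ n) * dX ^ n + y mod dX ^ n"
  have Rx: "reorder_idx (Suc n) K dX (a * dX ^ Suc n + x) = q * (K * dX) ^ n + reorder_idx n K dX x'"
    using reorder_idx_Suc'[OF K dX a x] by (simp add: q_def x'_def)
  have Ry: "reorder_idx (Suc n) K dX (b * dX ^ Suc n + y) = q' * (K * dX) ^ n + reorder_idx n K dX y'"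
    using reorder_idx_Suc'[OF K dX b y] by (simp add: q'_def y'_def)
  have rb: "reorder_idx n K dX x' < (K * dX) ^ n" "reorder_idx n K dX y' < (K * dX) ^ n"
    using reorder_idx_bound[OF K dX] by auto
  have ad: "a div K ^ n < K" "b div K ^ n < K" using a b by (auto simp: less_mult_imp_div_less)
  have xd0: "x div dX ^ n < dX" "y div dX ^ n < dX" using x y by (auto simp: less_mult_imp_div_less)
  have qb: "q < K * dX" "q' < K * dX"
    unfolding q_def q'_def by (rule idx_bound[OF ad(1) xd0(1)], rule idx_bound[OF ad(2) xd0(2)])
  have R1: "q * (K * dX) ^ n + reorder_idx n K dX x' < (K * dX) * (K * dX) ^ n"
    "q' * (K * dX) ^ n + reorder_idx n K dX y' < (K * dX) * (K * dX) ^ n"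
    using idx_bound[OF qb(1) rb(1)] idx_bound[OF qb(2) rb(2)] by auto
  have "blk (dX ^ Suc n) (Pn (Suc n) K p \<sigma> dX) a b $$ (x, y)
      = kron ?P ?KP $$ (q * (K * dX) ^ n + reorder_idx n K dX x', q' * (K * dX) ^ n + reorder_idx n K dX y')"
    using x y xb by (simp add: Pn_index Rx Ry del: power_Suc)
  also have "\<dots> = ?P $$ (q, q') * ?KP $$ (reorder_idx n K dX x', reorder_idx n K dX y')"
  proof -
    have Pd: "dim_row ?P = K * dX" "dim_col ?P = K * dX" by (simp_all add: prep_state_def)
    have KPd: "dim_row ?KP = (K * dX) ^ n" "dim_col ?KP = (K * dX) ^ n" using KPc by auto
    let ?R = "q * (K * dX) ^ n + reorder_idx n K dX x'" and ?C = "q' * (K * dX) ^ n + reorder_idx n K dX y'"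
    have "kron ?P ?KP $$ (?R, ?C) = ?P $$ (?R div (K * dX) ^ n, ?C div (K * dX) ^ n) * ?KP $$ (?R mod (K * dX) ^ n, ?C mod (K * dX) ^ n)"
      using kron_index[of ?R ?P ?KP ?C] R1 unfolding Pd KPd by blast
    then show ?thesis using rb by (simp only: dm1)
  qed
  also have "\<dots> = kron (blk dX ?P (a div K ^ n) (b div K ^ n)) (blk (dX ^ n) (Pn n K p \<sigma> dX) (a mod K ^ n) (b mod K ^ n)) $$ (x, y)"
  proof -
    have xs: "x < dX * dX ^ n" "y < dX * dX ^ n" using x y by auto
    have xd: "x div dX ^ n < dX" "y div dX ^ n < dX" using xs by (auto simp: less_mult_imp_div_less mult.commute)
    have xm: "x mod dX ^ n < dX ^ n" "y mod dX ^ n < dX ^ n" using dX by auto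
    have am: "a mod K ^ n < K ^ n" "b mod K ^ n < K ^ n" using K by auto
    have x'b: "x' < (K * dX) ^ n" "y' < (K * dX) ^ n"
      unfolding x'_def y'_def using idx_bound[OF am(1) xm(1)] idx_bound[OF am(2) xm(2)]
      by (simp_all add: power_mult_distrib)
    show ?thesis
      using kron_index[of x "blk dX ?P (a div K ^ n) (b div K ^ n)" "blk (dX ^ n) (Pn n K p \<sigma> dX) (a mod K ^ n) (b mod K ^ n)" y]
        xs xd xm x'b by (simp add: Pn_index q_def q'_def x'_def y'_def)
  qed
  finally show "blk (dX ^ Suc n) (Pn (Suc n) K p \<sigma> dX) a b $$ (x, y) =
    kron (blk dX ?P (a div K ^ n) (b div K ^ n)) (blk (dX ^ n) (Pn n K p \<sigma> dX) (a mod K ^ n) (b mod K ^ n)) $$ (x, y)" .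
qed auto



lemma Psi_zero:
  assumes ch: "channel dV dR \<Psi>"
  shows "\<Psi> (0\<^sub>m dV dV) = 0\<^sub>m dR dR"
proof -
  have z: "0\<^sub>m dV dV = (0::complex) \<cdot>\<^sub>m 0\<^sub>m dV dV" by (rule eq_matI) auto
  have c: "\<Psi> (0\<^sub>m dV dV) \<in> carrier_mat dR dR" using ch by (simp add: channel_def)
  have H: "\<forall>M\<in>carrier_mat dV dV. \<forall>a::complex. \<Psi> (a \<cdot>\<^sub>m M) = a \<cdot>\<^sub>m \<Psi> M"
    using ch by (simp add: channel_def)
  have h: "\<Psi> ((0::complex) \<cdot>\<^sub>m 0\<^sub>m dV dV) = 0 \<cdot>\<^sub>m \<Psi> (0\<^sub>m dV dV)"
    using H[rule_format, OF zero_carrier_mat] .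
  have "\<Psi> (0\<^sub>m dV dV) = \<Psi> ((0::complex) \<cdot>\<^sub>m 0\<^sub>m dV dV)" using z by (rule arg_cong)
  also note h
  finally have "\<Psi> (0\<^sub>m dV dV) = (0::complex) \<cdot>\<^sub>m \<Psi> (0\<^sub>m dV dV)" .
  also have "\<dots> = 0\<^sub>m dR dR" by (rule eq_matI) (use c in auto)
  finally show ?thesis .
qed

lemma G:
  assumes K: "0 < K" and dV: "0 < dV" and dR: "0 < dR" and ch: "channel dV dR \<Psi>"
    and xc: "\<forall>k<K. \<xi> k \<in> carrier_mat dV dV" and rel: "\<forall>k<K. \<rho> k = \<Psi> (\<xi> k)"
  shows "a < K ^ n \<Longrightarrow> b < K ^ n \<Longrightarrow>
    Tn n dV dR \<Psi> (blk (dV ^ n) (Pn n K p \<xi> dV) a b) = blk (dR ^ n) (Pn n K p \<rho> dR) a b"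
proof (induction n arbitrary: a b)
  case 0
  then have "a = 0" "b = 0" by auto
  then show ?case
    by (intro eq_matI) (auto simp: Pn_index reorder_idx_def)
next
  case (Suc n)
  have rc: "\<forall>k<K. \<rho> k \<in> carrier_mat dR dR" using rel xc ch by (simp add: channel_def)
  define a0 where "a0 = a div K ^ n"
  define b0 where "b0 = b div K ^ n"
  define a' where "a' = a mod K ^ n"
  define b' where "b' = b mod K ^ n"
  have ab0: "a0 < K" "b0 < K" using Suc.prems
    by (auto simp: a0_def b0_def less_mult_imp_div_less mult.commute)
  have ab': "a' < K ^ n" "b' < K ^ n" using K by (auto simp: a'_def b'_def)
  have hA: "\<Psi> (blk dV (prep_state K p \<xi> dV) a0 b0) = blk dR (prep_state K p \<rho> dR) a0 b0"
  proof (cases "a0 = b0")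
    case True
    then show ?thesis using ab0 xc rc rel ch by (simp add: blk_prep channel_def)
  next
    case False
    then show ?thesis using ab0 xc rc Psi_zero[OF ch] by (simp add: blk_prep)
  qed
  have "Tn (Suc n) dV dR \<Psi> (blk (dV ^ Suc n) (Pn (Suc n) K p \<xi> dV) a b)
     = Tn (Suc n) dV dR \<Psi> (kron (blk dV (prep_state K p \<xi> dV) a0 b0) (blk (dV ^ n) (Pn n K p \<xi> dV) a' b'))"
    using blk_Pn_Suc[OF K dV Suc.prems] by (simp add: a0_def b0_def a'_def b'_def del: Tn.simps)
  also have "\<dots> = kron (\<Psi> (blk dV (prep_state K p \<xi> dV) a0 b0)) (Tn n dV dR \<Psi> (blk (dV ^ n) (Pn n K p \<xi> dV) a' b'))"
    by (rule Tn_kron[OF ch dR]) auto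
  also have "\<dots> = kron (blk dR (prep_state K p \<rho> dR) a0 b0) (blk (dR ^ n) (Pn n K p \<rho> dR) a' b')"
    using hA Suc.IH[OF ab'] by simp
  also have "\<dots> = blk (dR ^ Suc n) (Pn (Suc n) K p \<rho> dR) a b"
    using blk_Pn_Suc[OF K dR Suc.prems] by (simp add: a0_def b0_def a'_def b'_def)
  finally show ?case .
qed

theorem lemma8:
  fixes n K dR dV dB dOut :: nat
    and p :: "nat \<Rightarrow> real"
    and \<rho> \<xi> :: "nat \<Rightarrow> complex mat"
    and \<Psi> \<E> \<E>ideal :: "complex mat \<Rightarrow> complex mat"
    and \<epsilon>sec :: real
  assumes p_nonneg: "\<forall>k<K. 0 \<le> p k"
    and p_sum: "(\<Sum>k<K. p k) = 1"
    and rho_states: "\<forall>k<K. density dR (\<rho> k)"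
    and xi_states: "\<forall>k<K. density dV (\<xi> k)"
    and E_channel: "channel (K ^ n * dB) dOut \<E>"
    and Eideal_channel: "channel (K ^ n * dB) dOut \<E>ideal"
    and source_map: "channel dV dR \<Psi>"
    and source_rel: "\<forall>k<K. \<rho> k = \<Psi> (\<xi> k)"
    and virtual_secret: "secret n K p \<xi> dV dB dOut \<E> \<E>ideal \<epsilon>sec"
  shows "secret n K p \<rho> dR dB dOut \<E> \<E>ideal \<epsilon>sec"
proof -
  have K: "0 < K" using p_sum by (auto intro: gr0I)
  have dpos: "0 < d" if "density d M" for d M
  proof (rule gr0I)
    assume "d = 0"
    then have "dim_row M = 0" using that by (auto simp: density_def)
    then have "mtrace M = 0" by (simp add: mtrace_def)
    then show False using that by (simp add: density_def)
  qed
  have dV: "0 < dV" using xi_states K dpos by blast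
  have dR: "0 < dR" using rho_states K dpos by blast
  have xc: "\<forall>k<K. \<xi> k \<in> carrier_mat dV dV" using xi_states by (simp add: density_def)
  have cT: "channel (dV ^ n) (dR ^ n) (Tn n dV dR \<Psi>)" by (rule channel_Tn[OF source_map dR])
  show ?thesis
    unfolding secret_def Let_def
  proof (intro allI impI)
    fix dE :: nat and \<Phi> :: "complex mat \<Rightarrow> complex mat"
    assume dE: "0 < dE" and ch: "channel (dR ^ n) (dB * dE) \<Phi>"
    have c': "channel (dV ^ n) (dB * dE) (\<Phi> \<circ> Tn n dV dR \<Psi>)" by (rule channel_comp[OF cT ch])
    have Tc: "\<And>M. M \<in> carrier_mat (dV ^ n) (dV ^ n) \<Longrightarrow> Tn n dV dR \<Psi> M \<in> carrier_mat (dR ^ n) (dR ^ n)"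
      using cT by (simp add: channel_def)
    have eq: "id_tensor (K ^ n) (dV ^ n) (dB * dE) (\<Phi> \<circ> Tn n dV dR \<Psi>) (Pn n K p \<xi> dV)
        = id_tensor (K ^ n) (dR ^ n) (dB * dE) \<Phi> (Pn n K p \<rho> dR)"
    proof (rule eq_matI)
      fix r c assume "r < dim_row (id_tensor (K ^ n) (dR ^ n) (dB * dE) \<Phi> (Pn n K p \<rho> dR))"
        "c < dim_col (id_tensor (K ^ n) (dR ^ n) (dB * dE) \<Phi> (Pn n K p \<rho> dR))"
      then have rc: "r < K ^ n * (dB * dE)" "c < K ^ n * (dB * dE)" by auto
      then have "r div (dB * dE) < K ^ n" "c div (dB * dE) < K ^ n" by (auto simp: less_mult_imp_div_less)
      then show "id_tensor (K ^ n) (dV ^ n) (dB * dE) (\<Phi> \<circ> Tn n dV dR \<Psi>) (Pn n K p \<xi> dV) $$ (r, c)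
          = id_tensor (K ^ n) (dR ^ n) (dB * dE) \<Phi> (Pn n K p \<rho> dR) $$ (r, c)"
        using rc G[OF K dV dR source_map xc source_rel] by (simp add: id_tensor_blk)
    qed auto
    have "(1/2) * trace_norm (tensor_id (K ^ n * dB) dOut dE \<E> (id_tensor (K ^ n) (dV ^ n) (dB * dE) (\<Phi> \<circ> Tn n dV dR \<Psi>) (Pn n K p \<xi> dV))
        - tensor_id (K ^ n * dB) dOut dE \<E>ideal (id_tensor (K ^ n) (dV ^ n) (dB * dE) (\<Phi> \<circ> Tn n dV dR \<Psi>) (Pn n K p \<xi> dV))) \<le> \<epsilon>sec"
      using virtual_secret dE c' unfolding secret_def Let_def Pn_def by blast
    note this[unfolded eq]
    then show "(1/2) * trace_norm (tensor_id (K ^ n * dB) dOut dE \<E> (id_tensor (K ^ n) (dR ^ n) (dB * dE) \<Phi> (reorder n K dR (kron_pow n (prep_state K p \<rho> dR))))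
        - tensor_id (K ^ n * dB) dOut dE \<E>ideal (id_tensor (K ^ n) (dR ^ n) (dB * dE) \<Phi> (reorder n K dR (kron_pow n (prep_state K p \<rho> dR))))) \<le> \<epsilon>sec"
      unfolding Pn_def[symmetric] .
  qed
qed

end
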